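(* Let $n\ge1$ and let $\mathcal{C}^n\subset M_{\mathbb{R}}/2\pi M$ be the coamoeba of the pair of pants $\mathcal{P}^n$. Then $\mathcal{C}^n$ is the complement of the image, under the quotient map $M_{\mathbb{R}}\to M_{\mathbb{R}}/2\pi M$, of the interior of $\pi Z_n$.
   Context: Let $\widetilde{M}=\mathbb{Z}\langle e_1,\dots,e_{n+2}\rangle$, $e_{[n+2]}=e_1+\dots+e_{n+2}$, $M=\widetilde{M}/\langle e_{[n+2]}\rangle$, $M_{\mathbb{R}}=M\otimes\mathbb{R}$. Identify $M_{\mathbb{C}^*}=M\otimes\mathbb{C}^*$ with $\mathbb{CP}^{n+1}\setminus\bigcup_j\{z_j=0\}$, and let $\mathrm{Arg}\colon M_{\mathbb{C}^*}\to M_{\mathbb{R}}/2\pi M$ be induced by $(z_1,\dots,z_{n+2})\mapsto(\arg z_1,\dots,\arg z_{n+2})$. The pair of pants is $\mathcal{P}^n=\{\sum_j z_j=0\}\subset M_{\mathbb{C}^*}$, and its coamoeba $\mathcal{C}^n$ is the closure of $\mathrm{Arg}(\mathcal{P}^n)$. The zonotope is $Z_n=\{\sum_j\theta_je_j:\theta_j\in[0,1]\}\subset M_{\mathbb{R}}$; interior is taken in $M_{\mathbb{R}}$. *)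

theory Defs
  imports "HOL-Analysis.Analysis"
begin

text \<open>Index type 'n has n+2 elements; a vector theta in real^'n represents
  the point of M_R (mod the line spanned by e_[n+2]) and of the torus
  M_R / 2 pi M.  Subsets of the quotients are represented by their
  (saturated) preimages in real^'n.\<close>

text \<open>theta and theta' represent the same point of M_R / 2 pi M, i.e. they differ by
  an element of R e_[n+2] + 2 pi Z^(n+2).\<close>
definition torus_equiv :: "real^'n \<Rightarrow> real^'n \<Rightarrow> bool" where
  "torus_equiv \<theta> \<theta>' \<longleftrightarrow>
     (\<exists>t::real. \<exists>k::int^'n. \<forall>j. \<theta>' $ j = \<theta> $ j + t + 2 * pi * of_int (k $ j))"

text \<open>Preimage in real^'n of Arg(P^n): arguments of points (z_1,...,z_(n+2)) with
  all z_j nonzero and sum z_j = 0.\<close>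
definition coamoeba_arg_image :: "(real^'n) set" where
  "coamoeba_arg_image =
     {\<theta>. \<exists>z::complex^'n. (\<forall>j. z $ j \<noteq> 0) \<and> (\<Sum>j\<in>UNIV. z $ j) = 0 \<and>
          torus_equiv (\<chi> j. Arg (z $ j)) \<theta>}"

text \<open>Preimage of the coamoeba C^n (closure of Arg(P^n) in the torus).  Since the
  quotient map real^'n -> torus is open, this is the closure of the preimage.\<close>
definition coamoeba :: "(real^'n) set" where
  "coamoeba = closure coamoeba_arg_image"

text \<open>Preimage in real^'n of pi Z_n subset M_R.\<close>
definition pi_zonotope :: "(real^'n) set" where
  "pi_zonotope = {(\<chi> j. pi * s $ j + c) | (s::real^'n) c::real. \<forall>j. 0 \<le> s $ j \<and> s $ j \<le> 1}"

text \<open>Preimage in real^'n of the image in the torus of the interior (in M_R) of pi Z_n.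
  (For the open quotient map real^'n -> M_R, the preimage of the interior is the
  interior of the preimage.)\<close>
definition torus_image_interior_pi_zonotope :: "(real^'n) set" where
  "torus_image_interior_pi_zonotope =
     {\<theta>. \<exists>x \<in> interior pi_zonotope. torus_equiv x \<theta>}"

end

theory Submission imports Defs begin

lemma cis_eq_int:
  assumes "cis x = cis y" shows "\<exists>k::int. x = y + 2*pi * of_int k"
proof -
  from assms have "exp (\<i> * complex_of_real x) = exp (\<i> * complex_of_real y)" by (simp add: cis_conv_exp)
  then obtain n::int where "\<i> * complex_of_real x = \<i> * complex_of_real y + (of_int (2 * n) * pi) * \<i>"
    using exp_eq by blast
  then have "Im (\<i> * complex_of_real x) = Im (\<i> * complex_of_real y + (of_int (2 * n) * pi) * \<i>)"
    by simp
  then have "x = y + 2*pi * of_int n" by simp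
  then show ?thesis by blast
qed

definition spreadS :: "(real^'n::finite) set" where
  "spreadS = (\<Inter>i. \<Inter>j. {x. x$i - x$j < pi})"

lemma open_spreadS: "open spreadS"
  unfolding spreadS_def
  by (intro open_INT ballI open_Collect_less continuous_intros) auto

lemma spreadS_sub: "spreadS \<subseteq> pi_zonotope"
proof
  fix x :: "real^'a" assume x: "x \<in> spreadS"
  define c where "c = Min (range (\<lambda>j. x$j))"
  have c: "c \<le> x$j" for j unfolding c_def by simp
  have "c \<in> range (\<lambda>j. x$j)" unfolding c_def by (rule Min_in) auto
  then obtain m where m: "c = x$m" by auto
  define s where "s = (\<chi> j. (x$j - c)/pi)"
  have "x = (\<chi> j. pi * s $ j + c)" by (simp add: s_def vec_eq_iff)
  moreover have "\<forall>j. 0 \<le> s $ j \<and> s $ j \<le> 1"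
  proof
    fix j
    have "x$j - x$m < pi" using x unfolding spreadS_def by auto
    then show "0 \<le> s $ j \<and> s $ j \<le> 1" using c[of j] m by (simp add: s_def field_simps)
  qed
  ultimately show "x \<in> pi_zonotope" unfolding pi_zonotope_def by blast
qed

lemma spreadS_interior: "spreadS \<subseteq> interior pi_zonotope"
  using interior_maximal[OF spreadS_sub open_spreadS] .

lemma interior_spreadS: "interior pi_zonotope \<subseteq> spreadS"
proof
  fix x :: "real^'a" assume x: "x \<in> interior pi_zonotope"
  then obtain e where e: "e > 0" "ball x e \<subseteq> pi_zonotope" using mem_interior by blast
  show "x \<in> spreadS" unfolding spreadS_def
  proof (clarsimp)
    fix i j
    show "x$i - x$j < pi"
    proof (rule ccontr)
      assume "\<not> ?thesis"
      then have h: "x$i - x$j \<ge> pi" by simp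
      then have ij: "i \<noteq> j" using pi_gt_zero by (metis diff_self linorder_not_less)
      define y where "y = x + (e/2) *\<^sub>R axis i 1"
      have "dist x y < e" using e by (simp add: y_def dist_norm )
      then have "y \<in> pi_zonotope" using e by auto
      then obtain s c where y: "y = (\<chi> j. pi * s $ j + (c::real))" and s: "\<forall>j. 0 \<le> s $ j \<and> s $ j \<le> 1"
        unfolding pi_zonotope_def by blast
      have "y$i - y$j = pi * (s$i - s$j)" using y by (simp add: algebra_simps)
      also have "\<dots> \<le> pi" using s[rule_format, of i] s[rule_format, of j] by simp
      finally have "y$i - y$j \<le> pi" .
      moreover have "y$i - y$j = x$i - x$j + e/2" using ij by (simp add: y_def axis_def)
      ultimately show False using h e by simp
    qed
  qed
qed


lemma cis_add_2pi: "cis (a + 2*pi * of_int k) = cis a"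
  by (simp add: cis.ctr complex_eq_iff sin_add cos_add)

lemma open_T: "open (torus_image_interior_pi_zonotope :: (real^'n::finite) set)"
  unfolding open_contains_ball
proof
  fix th :: "real^'n" assume "th \<in> torus_image_interior_pi_zonotope"
  then obtain x t k where x: "x \<in> interior pi_zonotope"
    and eq: "\<forall>j. th $ j = x $ j + t + 2 * pi * of_int (k $ j)"
    unfolding torus_image_interior_pi_zonotope_def torus_equiv_def by blast
  obtain e where e: "e > 0" "ball x e \<subseteq> interior pi_zonotope"
    using x open_interior open_contains_ball by blast
  have "ball th e \<subseteq> torus_image_interior_pi_zonotope"
  proof
    fix y assume y: "y \<in> ball th e"
    define x' where "x' = y - (th - x)"
    have "dist x x' < e" using y by (simp add: x'_def dist_norm norm_minus_commute algebra_simps)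
    then have "x' \<in> interior pi_zonotope" using e by auto
    moreover have "\<forall>j. y $ j = x' $ j + t + 2 * pi * of_int (k $ j)"
      using eq by (simp add: x'_def)
    ultimately show "y \<in> torus_image_interior_pi_zonotope"
      unfolding torus_image_interior_pi_zonotope_def torus_equiv_def by blast
  qed
  then show "\<exists>e>0. ball th e \<subseteq> torus_image_interior_pi_zonotope" using e by blast
qed

lemma not_both:
  assumes "th \<in> (coamoeba_arg_image :: (real^'n::finite) set)"
  shows "th \<notin> torus_image_interior_pi_zonotope"
proof
  assume "th \<in> torus_image_interior_pi_zonotope"
  then obtain x t2 k2 where x: "x \<in> interior pi_zonotope"
    and eq2: "\<forall>j. th $ j = x $ j + t2 + 2 * pi * of_int (k2 $ j)"
    unfolding torus_image_interior_pi_zonotope_def torus_equiv_def by blast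
  have xs: "x \<in> spreadS" using x interior_spreadS by blast
  from assms obtain z :: "complex^'n" and t1 k1 where z: "\<forall>j. z $ j \<noteq> 0" "(\<Sum>j\<in>UNIV. z $ j) = 0"
    and eq1: "\<forall>j. th $ j = Arg (z $ j) + t1 + 2 * pi * of_int (k1 $ j)"
    unfolding coamoeba_arg_image_def torus_equiv_def by auto
  define m where "m = Min (range (\<lambda>j. x$j))"
  have mle: "m \<le> x$j" for j unfolding m_def by simp
  have "m \<in> range (\<lambda>j. x$j)" unfolding m_def by (rule Min_in) auto
  then obtain i where i: "m = x$i" by auto
  have rng: "0 \<le> x$j - m \<and> x$j - m < pi" for j
    using mle[of j] xs i unfolding spreadS_def by auto
  have cx: "cis (x$j) = sgn (z$j) * cis (t1 - t2)" for j
  proof -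
    have "x$j = Arg (z$j) + (t1 - t2) + 2*pi * of_int (k1$j - k2$j)"
      using eq1 eq2 by (simp add: algebra_simps)
    then have "cis (x$j) = cis (Arg (z$j) + (t1 - t2))" using cis_add_2pi by metis
    also have "\<dots> = sgn (z$j) * cis (t1 - t2)" using z(1) by (simp add: cis_mult[symmetric] cis_Arg)
    finally show ?thesis .
  qed
  have "(\<Sum>j\<in>UNIV. complex_of_real (norm (z$j)) * cis (x$j - m))
        = (\<Sum>j\<in>UNIV. z$j) * (cis (t1 - t2) * cis (-m))"
    unfolding sum_distrib_right
  proof (rule sum.cong)
    fix j :: 'n
    have "complex_of_real (norm (z$j)) * cis (x$j - m) = complex_of_real (norm (z$j)) * cis (x$j) * cis (- m)"
      by (simp add: cis_mult)
    also have "\<dots> = (complex_of_real (norm (z$j)) * sgn (z$j)) * cis (t1 - t2) * cis (-m)"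
      by (simp add: cx)
    also have "complex_of_real (norm (z$j)) * sgn (z$j) = z$j"
      by (cases "z$j = 0") (simp_all add: complex_sgn_def scaleR_conv_of_real field_simps)
    finally show "complex_of_real (norm (z$j)) * cis (x$j - m) = z$j * (cis (t1 - t2) * cis (-m))"
      by simp
  qed simp
  also have "\<dots> = 0" using z(2) by simp
  finally have S0: "(\<Sum>j\<in>UNIV. complex_of_real (norm (z$j)) * cis (x$j - m)) = 0" .
  then have "Im (\<Sum>j\<in>UNIV. complex_of_real (norm (z$j)) * cis (x$j - m)) = 0" by simp
  then have ims: "(\<Sum>j\<in>UNIV. norm (z$j) * sin (x$j - m)) = 0" by (simp add: Im_sum)
  have nn: "\<forall>j\<in>UNIV. 0 \<le> norm (z$j) * sin (x$j - m)"
  proof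
    fix j :: 'n
    have "0 \<le> sin (x$j - m)" using rng[of j] by (intro sin_ge_zero) auto
    then show "0 \<le> norm (z$j) * sin (x$j - m)" by simp
  qed
  have "\<forall>j\<in>UNIV. norm (z$j) * sin (x$j - m) = 0"
    using sum_nonneg_eq_0_iff[of UNIV "\<lambda>j. norm (z$j) * sin (x$j - m)"] nn ims by auto
  then have "x$j - m = 0" for j
    using rng[of j] z(1) sin_gt_zero[of "x$j - m"] by force
  then have "Re (\<Sum>j\<in>UNIV. complex_of_real (norm (z$j)) * cis (x$j - m)) = (\<Sum>j\<in>UNIV. norm (z$j))"
    by (simp add: Re_sum)
  moreover have "(\<Sum>j\<in>UNIV. norm (z$j)) > 0"
    using z(1) by (intro sum_pos) auto
  ultimately show False using S0 by simp
qed


lemma solve2: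
  fixes p q R :: complex
  assumes D: "Im (cnj p * q) \<noteq> 0"
  shows "complex_of_real (- Im (cnj R * q) / Im (cnj p * q)) * p
       + complex_of_real (- Im (cnj p * R) / Im (cnj p * q)) * q = - R"
proof -
  define d where "d = Im (cnj p * q)"
  have d: "d = Re p * Im q - Im p * Re q" "d \<noteq> 0" using D by (auto simp: d_def)
  have e1: "(- Im (cnj R * q)) * Re p + (- Im (cnj p * R)) * Re q = - Re R * d"
    by (simp add: d algebra_simps)
  have e2: "(- Im (cnj R * q)) * Im p + (- Im (cnj p * R)) * Im q = - Im R * d"
    by (simp add: d algebra_simps)
  have "(- Im (cnj R * q) / d) * Re p + (- Im (cnj p * R) / d) * Re q
      = ((- Im (cnj R * q)) * Re p + (- Im (cnj p * R)) * Re q) / d"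
    by (simp add: add_divide_distrib)
  also have "\<dots> = - Re R" using d(2) by (simp only: e1) simp
  finally have 1: "(- Im (cnj R * q) / d) * Re p + (- Im (cnj p * R) / d) * Re q = - Re R" .
  have "(- Im (cnj R * q) / d) * Im p + (- Im (cnj p * R) / d) * Im q
      = ((- Im (cnj R * q)) * Im p + (- Im (cnj p * R)) * Im q) / d"
    by (simp add: add_divide_distrib)
  also have "\<dots> = - Im R" using d(2) by (simp only: e2) simp
  finally have 2: "(- Im (cnj R * q) / d) * Im p + (- Im (cnj p * R) / d) * Im q = - Im R" .
  show ?thesis using 1 2 unfolding d_def[symmetric] by (simp add: complex_eq_iff)
qed

lemma sum_if_delta: "(\<Sum>j\<in>(UNIV::'n::finite set). complex_of_real (if j = a then v else 0) * w j) = complex_of_real v * w a"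
proof -
  have "(\<Sum>j\<in>(UNIV::'n set). complex_of_real (if j = a then v else 0) * w j) = (\<Sum>j\<in>(UNIV::'n set). if j = a then complex_of_real v * w j else 0)"
    by (rule sum.cong) auto
  then show ?thesis by simp
qed

lemma absorb:
  fixes th :: "real^'n::finite"
  assumes pos: "\<alpha> > 0" "\<beta> > 0" "\<gamma> > 0"
    and comb: "complex_of_real \<alpha> * cis (th$a) + complex_of_real \<beta> * cis (th$b) + complex_of_real \<gamma> * cis (th$c) = 0"
    and D: "Im (cnj (cis (th$a)) * cis (th$b)) \<noteq> 0"
  shows "th \<in> coamoeba_arg_image"
proof -
  define u where "u j = cis (th$j)" for j
  define Dv where "Dv = Im (cnj (u a) * u b)"
  have Dv: "Dv \<noteq> 0" using D by (simp add: Dv_def u_def)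
  have nu: "cnj (u j) * u j = 1" for j by (simp add: u_def cis_cnj cis_mult)
  have comb': "complex_of_real \<alpha> * u a + complex_of_real \<beta> * u b + complex_of_real \<gamma> * u c = 0"
    using comb by (simp add: u_def)
  have ab: "a \<noteq> b" using Dv nu[of a] by (auto simp: Dv_def)
  have ca: "c \<noteq> a"
  proof
    assume "c = a"
    then have "cnj (u a) * (complex_of_real \<alpha> * u a + complex_of_real \<beta> * u b + complex_of_real \<gamma> * u a) = 0"
      using comb' by simp
    then have "complex_of_real (\<alpha> + \<gamma>) + complex_of_real \<beta> * (cnj (u a) * u b) = 0"
      using nu[of a] by (simp add: algebra_simps)
    then have "Im (complex_of_real (\<alpha> + \<gamma>) + complex_of_real \<beta> * (cnj (u a) * u b)) = 0" by simp
    then have "\<beta> * Dv = 0" unfolding Dv_def by simp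
    then show False using Dv pos by simp
  qed
  have cb: "c \<noteq> b"
  proof
    assume "c = b"
    then have "cnj (u b) * (complex_of_real \<alpha> * u a + complex_of_real \<beta> * u b + complex_of_real \<gamma> * u b) = 0"
      using comb' by simp
    then have "complex_of_real (\<beta> + \<gamma>) + complex_of_real \<alpha> * (cnj (u b) * u a) = 0"
      using nu[of b] by (simp add: algebra_simps)
    then have "Im (complex_of_real (\<beta> + \<gamma>) + complex_of_real \<alpha> * (cnj (u b) * u a)) = 0" by simp
    then have "\<alpha> * Im (cnj (u b) * u a) = 0" by simp
    moreover have "Im (cnj (u b) * u a) = - Dv" unfolding Dv_def by simp
    ultimately show False using Dv pos by simp
  qed
  define R where "R = (\<Sum>j\<in>UNIV. u j)"
  define x where "x = - Im (cnj R * u b) / Dv"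
  define y where "y = - Im (cnj (u a) * R) / Dv"
  have xy: "complex_of_real x * u a + complex_of_real y * u b = - R"
    unfolding x_def y_def Dv_def by (rule solve2) (use Dv in \<open>simp add: Dv_def\<close>)
  define K where "K = \<bar>x\<bar> / \<alpha> + \<bar>y\<bar> / \<beta>"
  have Ka: "K * \<alpha> \<ge> \<bar>x\<bar>" using pos by (simp add: K_def field_simps)
  have Kb: "K * \<beta> \<ge> \<bar>y\<bar>" using pos by (simp add: K_def field_simps)
  have K0: "K \<ge> 0" using pos by (simp add: K_def)
  define r where "r j = 1 + (if j = a then K*\<alpha> + x else 0) + (if j = b then K*\<beta> + y else 0) + (if j = c then K*\<gamma> else 0)" for j
  have rpos: "r j > 0" for j
  proof -
    have g: "K*\<gamma> \<ge> 0" using K0 pos by simp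
    show ?thesis unfolding r_def using ab ca cb Ka Kb g by (smt (verit))
  qed
  have "(\<Sum>j\<in>UNIV. complex_of_real (r j) * u j)
      = R + complex_of_real (K*\<alpha> + x) * u a + complex_of_real (K*\<beta> + y) * u b + complex_of_real (K*\<gamma>) * u c"
    unfolding r_def R_def
    by (simp only: of_real_add distrib_right sum.distrib sum_if_delta) simp
  also have "\<dots> = R + (complex_of_real x * u a + complex_of_real y * u b)
      + complex_of_real K * (complex_of_real \<alpha> * u a + complex_of_real \<beta> * u b + complex_of_real \<gamma> * u c)"
    by (simp add: algebra_simps)
  also have "\<dots> = 0" using xy comb' by simp
  finally have S: "(\<Sum>j\<in>UNIV. complex_of_real (r j) * u j) = 0" .
  define z where "z = (\<chi> j. complex_of_real (r j) * u j)"
  have z0: "\<forall>j. z $ j \<noteq> 0" using rpos by (simp add: z_def u_def) (metis less_irrefl)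
  have zs: "(\<Sum>j\<in>UNIV. z $ j) = 0" using S by (simp add: z_def)
  have "\<exists>k::int. th$j = Arg (z$j) + 2*pi * of_int k" for j
  proof (rule cis_eq_int)
    have "cis (Arg (z$j)) = sgn (z$j)" using z0 by (simp add: cis_Arg)
    also have "\<dots> = u j" using rpos[of j]
      by (simp add: z_def u_def sgn_div_norm norm_mult scaleR_conv_of_real field_simps)
    finally show "cis (th$j) = cis (Arg (z$j))" by (simp add: u_def)
  qed
  then obtain kf where kf: "\<forall>j. th$j = Arg (z$j) + 2*pi * of_int (kf j)" by metis
  have "torus_equiv (\<chi> j. Arg (z $ j)) th"
    unfolding torus_equiv_def
    by (rule exI[of _ 0], rule exI[of _ "\<chi> j. kf j"]) (use kf in simp)
  then show ?thesis unfolding coamoeba_arg_image_def using z0 zs by blast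
qed


lemma perturb0:
  fixes th :: "real^'n::finite"
  assumes pq: "p \<noteq> q" "c \<noteq> p" "c \<noteq> q"
    and anti: "cis (th$q) = - cis (th$p)"
    and cc: "cis (th$c) = cis (th$p) * cis \<phi>"
    and ph: "0 \<le> \<phi>" "\<phi> < pi" and e: "\<epsilon> > 0"
  shows "\<exists>th'. dist th' th < \<epsilon> \<and> th' \<in> coamoeba_arg_image"
proof -
  define \<eta> where "\<eta> = min (\<epsilon>/3) ((pi - \<phi>)/3)"
  have eta0: "0 < \<eta>" "\<eta> \<le> \<epsilon>/3" "\<eta> \<le> (pi - \<phi>)/3"
    unfolding \<eta>_def using e ph by (simp_all only: min.cobounded1 min.cobounded2 min_less_iff_conj) auto
  have eta: "0 < \<eta>" "\<eta> \<le> \<epsilon>/3" "\<phi> + 2*\<eta> < pi" using eta0 ph by auto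
  define th' where "th' = (\<chi> j. if j = p then th$j - \<eta> else if j = c then th$j + \<eta> else th$j)"
  define v where "v = cis (th$p)"
  have up: "cis (th'$p) = v * cis (-\<eta>)" by (simp add: th'_def v_def cis_mult)
  have uq: "cis (th'$q) = - v" using pq anti by (simp add: th'_def v_def)
  have uc: "cis (th'$c) = v * cis (\<phi> + \<eta>)" using pq cc by (simp add: th'_def v_def cis_mult[symmetric] algebra_simps)
  have E: "complex_of_real (sin (\<phi>+\<eta>)) * cis (-\<eta>) - complex_of_real (sin (\<phi> + 2*\<eta>))
      + complex_of_real (sin \<eta>) * cis (\<phi>+\<eta>) = 0"
  proof -
    have "\<phi> + 2*\<eta> = (\<phi>+\<eta>) + \<eta>" by simp
    then have s2: "sin (\<phi> + 2*\<eta>) = sin (\<phi>+\<eta>) * cos \<eta> + cos (\<phi>+\<eta>) * sin \<eta>"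
      by (simp only: sin_add)
    show ?thesis unfolding s2 by (simp add: complex_eq_iff algebra_simps)
  qed
  have comb: "complex_of_real (sin (\<phi>+\<eta>)) * cis (th'$p) + complex_of_real (sin (\<phi> + 2*\<eta>)) * cis (th'$q)
      + complex_of_real (sin \<eta>) * cis (th'$c) = 0"
  proof -
    have "complex_of_real (sin (\<phi>+\<eta>)) * cis (th'$p) + complex_of_real (sin (\<phi> + 2*\<eta>)) * cis (th'$q)
      + complex_of_real (sin \<eta>) * cis (th'$c) = v * (complex_of_real (sin (\<phi>+\<eta>)) * cis (-\<eta>) - complex_of_real (sin (\<phi> + 2*\<eta>))
      + complex_of_real (sin \<eta>) * cis (\<phi>+\<eta>))"
      by (simp add: up uq uc algebra_simps)
    then show ?thesis using E by simp
  qed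
  have D: "Im (cnj (cis (th'$p)) * cis (th'$q)) \<noteq> 0"
  proof -
    have "cnj (cis (th'$p)) * cis (th'$q) = - (cnj v * v) * cis \<eta>"
      by (simp add: up uq cis_cnj algebra_simps)
    also have "cnj v * v = 1" by (simp add: v_def cis_cnj cis_mult)
    finally have "Im (cnj (cis (th'$p)) * cis (th'$q)) = - sin \<eta>" by simp
    moreover have "sin \<eta> > 0" using eta ph by (intro sin_gt_zero) auto
    ultimately show ?thesis by simp
  qed
  have pos: "sin (\<phi>+\<eta>) > 0" "sin (\<phi> + 2*\<eta>) > 0" "sin \<eta> > 0"
    using eta ph by (auto intro!: sin_gt_zero)
  have A: "th' \<in> coamoeba_arg_image"
    by (rule absorb[OF pos comb D])
  have "dist th' th \<le> (\<Sum>j\<in>UNIV. \<bar>(th' - th)$j\<bar>)"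
    unfolding dist_norm by (rule norm_le_l1_cart)
  also have "\<dots> = (\<Sum>j\<in>UNIV. (if j = p then \<eta> else 0) + (if j = c then \<eta> else 0))"
    by (rule sum.cong) (use pq eta in \<open>auto simp: th'_def\<close>)
  also have "\<dots> = 2*\<eta>" by (simp add: sum.distrib)
  also have "\<dots> < \<epsilon>" using eta e by simp
  finally show ?thesis using A by blast
qed

lemma perturb:
  fixes th :: "real^'n::finite"
  assumes pq: "p \<noteq> q" "c \<noteq> p" "c \<noteq> q"
    and anti: "cis (th$q) = - cis (th$p)"
    and e: "\<epsilon> > 0"
  shows "\<exists>th'. dist th' th < \<epsilon> \<and> th' \<in> coamoeba_arg_image"
proof -
  define \<psi> where "\<psi> = Arg (cis (th$c - th$p))"
  have psi: "-pi < \<psi>" "\<psi> \<le> pi" using Arg_bounded unfolding \<psi>_def by auto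
  have cpsi: "cis \<psi> = cis (th$c - th$p)" unfolding \<psi>_def
    by (simp add: cis_Arg sgn_div_norm)
  have cc: "cis (th$c) = cis (th$p) * cis \<psi>" by (simp add: cpsi cis_mult)
  show ?thesis
  proof (cases "0 \<le> \<psi> \<and> \<psi> < pi")
    case True
    then show ?thesis using perturb0[OF pq anti cc _ _ e] by blast
  next
    case False
    have anti': "cis (th$p) = - cis (th$q)" using anti by simp
    show ?thesis
    proof (cases "\<psi> < 0")
      case True
      have "cis (th$c) = cis (th$q) * cis (\<psi> + pi)"
        using cc anti by (simp add: cis_mult[symmetric] cis.ctr complex_eq_iff sin_add cos_add)
      then show ?thesis using perturb0[OF pq(1)[symmetric] pq(3) pq(2) anti' _ _ _ e] True psi by auto
    next
      case False
      then have "\<psi> = pi" using \<open>\<not> (0 \<le> \<psi> \<and> \<psi> < pi)\<close> psi by auto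
      then have "cis (th$c) = cis (th$q) * cis 0"
        using cc anti by (simp add: cis.ctr complex_eq_iff)
      then show ?thesis using perturb0[where \<phi>=0, OF pq(1)[symmetric] pq(3) pq(2) anti' _ _ _ e] by auto
    qed
  qed
qed


lemma approx:
  assumes card: "CARD('n::finite) \<ge> 3"
    and nT: "(th :: real^'n) \<notin> torus_image_interior_pi_zonotope"
  shows "th \<in> closure coamoeba_arg_image"
  unfolding closure_approachable
proof (intro allI impI)
  fix e :: real assume e: "e > 0"
  have third: "\<exists>c::'n. c \<noteq> p \<and> c \<noteq> q" for p q
  proof (rule ccontr)
    assume "\<not> ?thesis"
    then have "UNIV \<subseteq> {p, q}" by auto
    then have "CARD('n) \<le> card {p, q}" by (intro card_mono) auto
    also have "\<dots> \<le> 2" by (simp add: card_insert_if)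
    finally show False using card by simp
  qed
  obtain a :: 'n where True by simp
  define \<phi> where "\<phi> j = Arg (cis (th$j - th$a))" for j
  have phb: "-pi < \<phi> j" "\<phi> j \<le> pi" for j using Arg_bounded unfolding \<phi>_def by auto
  have cph: "cis (\<phi> j) = cis (th$j - th$a)" for j unfolding \<phi>_def
    by (simp add: cis_Arg sgn_div_norm)
  have cth: "cis (th$j) = cis (th$a) * cis (\<phi> j)" for j by (simp add: cph cis_mult)
  have pha: "\<phi> a = 0" unfolding \<phi>_def by simp
  show "\<exists>y\<in>coamoeba_arg_image. dist y th < e"
  proof (cases "\<exists>j. \<phi> j = pi")
    case True
    then obtain j where j: "\<phi> j = pi" by blast
    have ja: "a \<noteq> j" using j pha by auto
    have anti: "cis (th$j) = - cis (th$a)" using cth[of j] j by (simp add: cis.ctr complex_eq_iff)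
    obtain c where c: "c \<noteq> a" "c \<noteq> j" using third by blast
    show ?thesis using perturb[OF ja c anti e] by blast
  next
    case False
    have phl: "\<phi> j < pi" for j using phb(2)[of j] False by (auto simp: order_le_less)
    define M where "M = Max (range \<phi>)"
    define m where "m = Min (range \<phi>)"
    have Mge: "\<phi> j \<le> M" for j unfolding M_def by simp
    have mle: "m \<le> \<phi> j" for j unfolding m_def by simp
    have "M \<in> range \<phi>" unfolding M_def by (rule Max_in) auto
    then obtain b where b: "\<phi> b = M" by auto
    have "m \<in> range \<phi>" unfolding m_def by (rule Min_in) auto
    then obtain c where c: "\<phi> c = m" by auto
    have Mbd: "0 \<le> M" "M < pi" using Mge[of a] pha phl[of b] b by auto
    have mbd: "m \<le> 0" "-pi < m" using mle[of a] pha phb(1)[of c] c by auto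
    consider "M - m < pi" | "M - m = pi" | "M - m > pi" by linarith
    then show ?thesis
    proof cases
      case 1
      define x where "x = (\<chi> j. \<phi> j)"
      have "\<phi> i - \<phi> j < pi" for i j using Mge[of i] mle[of j] 1 by linarith
      then have "x \<in> spreadS" unfolding spreadS_def x_def by auto
      then have xi: "x \<in> interior pi_zonotope" using spreadS_interior by blast
      have "\<exists>k::int. th$j = (x$j + th$a) + 2*pi * of_int k" for j
      proof (rule cis_eq_int)
        have "cis (x$j + th$a) = cis (th$a) * cis (\<phi> j)" by (simp add: x_def cis_mult add.commute)
        then show "cis (th$j) = cis (x$j + th$a)" using cth[of j] by simp
      qed
      then obtain kf where kf: "\<forall>j. th$j = (x$j + th$a) + 2*pi * of_int (kf j)" by metis
      have "torus_equiv x th" unfolding torus_equiv_def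
        by (rule exI[of _ "th$a"], rule exI[of _ "\<chi> j. kf j"]) (unfold vec_lambda_beta, use kf in blast)
      then have "th \<in> torus_image_interior_pi_zonotope"
        unfolding torus_image_interior_pi_zonotope_def using xi by blast
      then show ?thesis using nT by blast
    next
      case 2
      have anti: "cis (th$c) = - cis (th$b)"
      proof -
        have "m = M - pi" using 2 by simp
        then have "cis m = - cis M" by (simp add: cis.ctr complex_eq_iff)
        then show ?thesis using cth[of c] cth[of b] b c by simp
      qed
      have bc: "b \<noteq> c" using b c 2 by auto
      obtain d where d: "d \<noteq> b" "d \<noteq> c" using third by blast
      show ?thesis using perturb[OF bc d anti e] by blast
    next
      case 3
      have M0: "M > 0" using 3 mbd by simp
      have m0: "m < 0" using 3 Mbd by simp
      have pos: "- sin (M - m) > 0" "- sin m > 0" "sin M > 0"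
      proof -
        have "sin (M - m) < 0" using 3 Mbd mbd by (intro sin_lt_zero) auto
        then show "- sin (M - m) > 0" by simp
        have "sin (-m) > 0" using m0 mbd by (intro sin_gt_zero) auto
        then show "- sin m > 0" by simp
        show "sin M > 0" using M0 Mbd by (intro sin_gt_zero) auto
      qed
      have comb: "complex_of_real (- sin (M - m)) * cis (th$a) + complex_of_real (- sin m) * cis (th$b)
          + complex_of_real (sin M) * cis (th$c) = 0"
      proof -
        have E: "complex_of_real (- sin (M - m)) + complex_of_real (- sin m) * cis M
          + complex_of_real (sin M) * cis m = 0"
          by (simp add: complex_eq_iff sin_diff algebra_simps)
        have "complex_of_real (- sin (M - m)) * cis (th$a) + complex_of_real (- sin m) * cis (th$b)
          + complex_of_real (sin M) * cis (th$c) = cis (th$a) * (complex_of_real (- sin (M - m)) + complex_of_real (- sin m) * cis M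
          + complex_of_real (sin M) * cis m)"
          using cth[of b] cth[of c] b c by (simp add: algebra_simps)
        then show ?thesis using E by simp
      qed
      have D: "Im (cnj (cis (th$a)) * cis (th$b)) \<noteq> 0"
      proof -
        have "cnj (cis (th$a)) * cis (th$b) = cis M"
          using cth[of b] b by (simp add: cis_cnj cis_mult)
        then show ?thesis using pos(3) by simp
      qed
      have "th \<in> coamoeba_arg_image" by (rule absorb[OF pos comb D])
      then show ?thesis using e by (intro bexI[of _ th]) auto
    qed
  qed
qed

theorem proposition2p4:
  assumes "CARD('n::finite) \<ge> 3"
  shows "(coamoeba :: (real^'n) set) = - torus_image_interior_pi_zonotope"
proof
  show "(coamoeba :: (real^'n) set) \<subseteq> - torus_image_interior_pi_zonotope"
    unfolding coamoeba_def
    by (rule closure_minimal) (use not_both open_T in \<open>auto simp: closed_Compl\<close>)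
  show "- torus_image_interior_pi_zonotope \<subseteq> (coamoeba :: (real^'n) set)"
    unfolding coamoeba_def using approx[OF assms] by blast
qed

end
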